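(* Let $\pi,\pi'$ be vertices of a Rauzy class $\mathcal{R}$ on the alphabet $\mathcal{A}$. Let $G\subseteq\mathrm{Sp}(\Omega_\pi,\mathbb{Z})$ be the subgroup generated by the symplectic transvections $\{T_{e_\alpha}\}_{\alpha\in\mathcal{A}}$ with respect to $\Omega_\pi$, and $G'\subseteq\mathrm{Sp}(\Omega_{\pi'},\mathbb{Z})$ the subgroup generated by $\{T'_{e_\alpha}\}_{\alpha\in\mathcal{A}}$ with respect to $\Omega_{\pi'}$. If $\gamma$ is any walk (using arrows of $\mathcal{R}$ and their reverses) from $\pi$ to $\pi'$, then the isomorphism $\mathrm{Sp}(\Omega_\pi,\mathbb{Z})\to\mathrm{Sp}(\Omega_{\pi'},\mathbb{Z})$, $S\mapsto B_\gamma SB_\gamma^{-1}$, restricts to an isomorphism between $G$ and $G'$.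
   Context: Permutations $\pi=(\pi_{\mathrm t},\pi_{\mathrm b})$ are pairs of bijections $\mathcal{A}\to\{1,\dots,d\}$, $d=|\mathcal{A}|\ge3$, assumed irreducible and nondegenerate; $\alpha_{\varepsilon,j}=\pi_\varepsilon^{-1}(j)$. Rauzy induction: the top operation, with $\alpha_{\mathrm b,k}=\alpha_{\mathrm t,d}$, replaces the bottom row by $\alpha_{\mathrm b,1},\dots,\alpha_{\mathrm b,k},\alpha_{\mathrm b,d},\alpha_{\mathrm b,k+1},\dots,\alpha_{\mathrm b,d-1}$ (winner $\alpha_{\mathrm t,d}$, loser $\alpha_{\mathrm b,d}$); the bottom operation, with $\alpha_{\mathrm t,k}=\alpha_{\mathrm b,d}$, replaces the top row by $\alpha_{\mathrm t,1},\dots,\alpha_{\mathrm t,k},\alpha_{\mathrm t,d},\alpha_{\mathrm t,k+1},\dots,\alpha_{\mathrm t,d-1}$ (winner $\alpha_{\mathrm b,d}$, loser $\alpha_{\mathrm t,d}$). A Rauzy class is a connected component of the directed graph with arrows $\pi\to R_{\mathrm t}(\pi),\pi\to R_{\mathrm b}(\pi)$. $(\Omega_\pi)_{\alpha\beta}=+1$ if $\pi_{\mathrm t}(\alpha)<\pi_{\mathrm t}(\beta)$ and $\pi_{\mathrm b}(\alpha)>\pi_{\mathrm b}(\beta)$, $-1$ if the reverse inequalities hold, $0$ otherwise. For an arrow with winner $\alpha_{\mathrm w}$, loser $\alpha_{\mathrm l}$, $B_\gamma=\mathrm{Id}+E_{\alpha_{\mathrm l}\alpha_{\mathrm w}}$,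 $B_{\gamma^{-1}}=B_\gamma^{-1}$, $B_{\gamma_1\cdots\gamma_n}=B_{\gamma_n}\cdots B_{\gamma_1}$; for a walk from $\pi$ to $\pi'$, $\Omega_{\pi'}=B_\gamma\Omega_\pi B_\gamma^{\intercal}$. $\mathrm{Sp}(\Omega,\mathbb{Z})=\{S\in\mathrm{GL}(\mathbb{Z}^{\mathcal{A}}):S\Omega S^{\intercal}=\Omega\}$ acting on row vectors. With $\langle u,v\rangle=u\Omega v^{\intercal}$, the symplectic transvection along $v$ is $T_v(u)=u+\langle v,u\rangle v$; $e_\alpha$ are the canonical basis vectors. *)

theory Defs
  imports "HOL-Analysis.Analysis"
begin

text \<open>Alphabet: a finite type 'a; d = CARD('a).  A permutation is a pair
  (pi_t, pi_b) of bijections from the alphabet onto {1..d}.\<close>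

type_synonym 'a perm_pair = "('a \<Rightarrow> nat) \<times> ('a \<Rightarrow> nat)"

definition is_perm_pair :: "('a::finite) perm_pair \<Rightarrow> bool" where
  "is_perm_pair p \<longleftrightarrow>
     bij_betw (fst p) UNIV {1..CARD('a)} \<and> bij_betw (snd p) UNIV {1..CARD('a)}"

definition alpha_t :: "('a::finite) perm_pair \<Rightarrow> nat \<Rightarrow> 'a" where
  "alpha_t p j = inv (fst p) j"

definition alpha_b :: "('a::finite) perm_pair \<Rightarrow> nat \<Rightarrow> 'a" where
  "alpha_b p j = inv (snd p) j"

definition irreducible_perm :: "('a::finite) perm_pair \<Rightarrow> bool" where
  "irreducible_perm p \<longleftrightarrow>
     (\<forall>k. 1 \<le> k \<and> k < CARD('a) \<longrightarrow>
        {a. fst p a \<le> k} \<noteq> {a. snd p a \<le> k})"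

text \<open>Top Rauzy operation: with alpha_{b,k} = alpha_{t,d}, the bottom row becomes
  alpha_{b,1},...,alpha_{b,k},alpha_{b,d},alpha_{b,k+1},...,alpha_{b,d-1}.\<close>
definition rauzy_top :: "('a::finite) perm_pair \<Rightarrow> 'a perm_pair" where
  "rauzy_top p =
     (let d = CARD('a); k = snd p (alpha_t p d); l = alpha_b p d in
      (fst p, (\<lambda>b. if b = l then k + 1 else if snd p b \<le> k then snd p b else snd p b + 1)))"

text \<open>Bottom Rauzy operation: with alpha_{t,k} = alpha_{b,d}, the top row becomes
  alpha_{t,1},...,alpha_{t,k},alpha_{t,d},alpha_{t,k+1},...,alpha_{t,d-1}.\<close>
definition rauzy_bot :: "('a::finite) perm_pair \<Rightarrow> 'a perm_pair" where
  "rauzy_bot p =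
     (let d = CARD('a); k = fst p (alpha_b p d); l = alpha_t p d in
      ((\<lambda>b. if b = l then k + 1 else if fst p b \<le> k then fst p b else fst p b + 1), snd p))"

definition rauzy_op :: "bool \<Rightarrow> ('a::finite) perm_pair \<Rightarrow> 'a perm_pair" where
  "rauzy_op eps p = (if eps then rauzy_top p else rauzy_bot p)"

definition winner :: "bool \<Rightarrow> ('a::finite) perm_pair \<Rightarrow> 'a" where
  "winner eps p = (if eps then alpha_t p CARD('a) else alpha_b p CARD('a))"

definition loser :: "bool \<Rightarrow> ('a::finite) perm_pair \<Rightarrow> 'a" where
  "loser eps p = (if eps then alpha_b p CARD('a) else alpha_t p CARD('a))"

definition rauzy_arrows :: "(('a::finite) perm_pair \<times> 'a perm_pair) set" where
  "rauzy_arrows = {(p, rauzy_op eps p) | p eps. is_perm_pair p \<and> irreducible_perm p}"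

definition rauzy_class :: "('a::finite) perm_pair \<Rightarrow> 'a perm_pair set" where
  "rauzy_class p0 = {p. (p0, p) \<in> (rauzy_arrows \<union> rauzy_arrows\<inverse>)\<^sup>*}"

definition Omega :: "('a::finite) perm_pair \<Rightarrow> int^'a^'a" where
  "Omega p = (\<chi> a b.
      if fst p a < fst p b \<and> snd p a > snd p b then 1
      else if fst p a > fst p b \<and> snd p a < snd p b then -1 else 0)"

definition elem_mat :: "'a::finite \<Rightarrow> 'a \<Rightarrow> int^'a^'a" where
  "elem_mat a b = (\<chi> i j. if i = a \<and> j = b then 1 else 0)"

definition B_arrow :: "bool \<Rightarrow> ('a::finite) perm_pair \<Rightarrow> int^'a^'a" where
  "B_arrow eps p = mat 1 + elem_mat (loser eps p) (winner eps p)"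

text \<open>walk R p B q: there is a walk in R (arrows of R and their reverses) from
  p to q whose matrix B_gamma is B, with B_{gamma_1...gamma_n} = B_{gamma_n}...B_{gamma_1}
  and B_{gamma^{-1}} = B_gamma^{-1}.\<close>
inductive rauzy_walk :: "('a::finite) perm_pair set \<Rightarrow> 'a perm_pair \<Rightarrow> int^'a^'a \<Rightarrow> 'a perm_pair \<Rightarrow> bool"
  for R where
  nil: "p \<in> R \<Longrightarrow> rauzy_walk R p (mat 1) p"
| fwd: "rauzy_walk R p B q \<Longrightarrow> q \<in> R \<Longrightarrow> rauzy_op eps q \<in> R \<Longrightarrow>
        rauzy_walk R p (B_arrow eps q ** B) (rauzy_op eps q)"
| bwd: "rauzy_walk R p B q \<Longrightarrow> r \<in> R \<Longrightarrow> rauzy_op eps r = q \<Longrightarrow>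
        rauzy_walk R p (matrix_inv (B_arrow eps r) ** B) r"

text \<open>Sp(Omega, Z) (matrices acting on row vectors).\<close>
definition Sp :: "int^'a^'a \<Rightarrow> (int^'a^'a) set" where
  "Sp Om = {S. invertible S \<and> S ** Om ** transpose S = Om}"

definition symp_form :: "int^'a^'a \<Rightarrow> int^'a \<Rightarrow> int^'a \<Rightarrow> int" where
  "symp_form Om u v = (\<Sum>i\<in>UNIV. \<Sum>j\<in>UNIV. u $ i * Om $ i $ j * v $ j)"

text \<open>Symplectic transvection T_v(u) = u + <v,u> v, and its matrix (acting on
  row vectors: u v* transvection Om v = T_v(u)).\<close>
definition transv_map :: "int^'a^'a \<Rightarrow> int^'a \<Rightarrow> int^'a \<Rightarrow> int^'a" where
  "transv_map Om v u = u + symp_form Om v u *s v"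

definition transvection :: "int^'a^'a \<Rightarrow> int^'a \<Rightarrow> int^'a^'a" where
  "transvection Om v = (\<chi> i. transv_map Om v (axis i 1))"

inductive_set gen_group :: "(int^'a^'a) set \<Rightarrow> (int^'a^'a) set" for S where
  one: "mat 1 \<in> gen_group S"
| mul: "s \<in> S \<Longrightarrow> g \<in> gen_group S \<Longrightarrow> s ** g \<in> gen_group S"
| inv: "s \<in> S \<Longrightarrow> g \<in> gen_group S \<Longrightarrow> matrix_inv s ** g \<in> gen_group S"

definition transv_group :: "int^'a^'a \<Rightarrow> (int^'a^'a) set" where
  "transv_group Om = gen_group {transvection Om (axis a 1) | a. True}"

end

theory Submission
  imports Defs
begin


lemma axis_vm: "axis i (1::'r::semiring_1) v* M = M $ i"
  by (simp add: vec_eq_iff vector_matrix_mult_def axis_def if_distrib if_distribR sum.delta cong: if_cong)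

lemma mat_eq_rows:
  fixes M N :: "'r::semiring_1^'n^'m"
  assumes "\<And>x. x v* M = x v* N" shows "M = N"
  by (metis assms axis_vm vec_eq_iff)

lemma inv_unique:
  fixes A :: "'r::semiring_1^'n^'n"
  assumes "A ** A' = mat 1" "A' ** A = mat 1"
  shows "matrix_inv A = A'"
proof -
  have ex: "\<exists>X. A ** X = mat 1 \<and> X ** A = mat 1" using assms by blast
  define X where "X = matrix_inv A"
  have X: "A ** X = mat 1 \<and> X ** A = mat 1"
    unfolding X_def matrix_inv_def by (rule someI_ex[OF ex])
  have "X = X ** (A ** A')" using assms by simp
  also have "\<dots> = (X ** A) ** A'" by (simp add: matrix_mul_assoc)
  also have "\<dots> = A'" using X by simp
  finally show ?thesis unfolding X_def .
qed

lemma invertible_inv: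
  fixes A :: "'r::semiring_1^'n^'n"
  assumes "invertible A"
  shows "A ** matrix_inv A = mat 1" "matrix_inv A ** A = mat 1"
proof -
  have ex: "\<exists>X. A ** X = mat 1 \<and> X ** A = mat 1" using assms unfolding invertible_def by blast
  have "A ** matrix_inv A = mat 1 \<and> matrix_inv A ** A = mat 1"
    unfolding matrix_inv_def by (rule someI_ex[OF ex])
  then show "A ** matrix_inv A = mat 1" "matrix_inv A ** A = mat 1" by auto
qed

lemma smult_vm: "((c::int) *s x) v* A = c *s (x v* A)"
  by (simp add: vec_eq_iff vector_matrix_mult_def sum_distrib_left mult.assoc)

lemma add_vm: "((x::int^'n) + y) v* A = x v* A + y v* A"
  by (simp add: vec_eq_iff vector_matrix_mult_def sum.distrib distrib_right)

lemma sf_alt: "symp_form Om u v = (\<Sum>j\<in>UNIV. (u v* Om) $ j * v $ j)"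
  unfolding symp_form_def vector_matrix_mult_def
  by (simp add: sum_distrib_right) (rule sum.swap)

lemma dot_transpose:
  "(\<Sum>j\<in>UNIV. (z v* transpose C) $ j * (y::int^'n) $ j) = (\<Sum>i\<in>UNIV. z $ i * (y v* C) $ i)"
proof -
  have "(\<Sum>j\<in>UNIV. (z v* transpose C) $ j * y $ j) = (\<Sum>j\<in>UNIV. \<Sum>i\<in>UNIV. z $ i * (C $ j $ i * y $ j))"
    unfolding vector_matrix_mult_def transpose_def by (simp add: sum_distrib_right mult.assoc)
  also have "\<dots> = (\<Sum>i\<in>UNIV. \<Sum>j\<in>UNIV. z $ i * (C $ j $ i * y $ j))" by (rule sum.swap)
  also have "\<dots> = (\<Sum>i\<in>UNIV. z $ i * (y v* C) $ i)"
    unfolding vector_matrix_mult_def by (simp add: sum_distrib_left mult.commute)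
  finally show ?thesis .
qed

lemma sf_conj:
  fixes C Om :: "int^'n^'n"
  shows "symp_form (C ** Om ** transpose C) x y = symp_form Om (x v* C) (y v* C)"
proof -
  have "x v* (C ** Om ** transpose C) = ((x v* C) v* Om) v* transpose C"
    by (simp only: vector_matrix_mul_assoc)
  then show ?thesis unfolding sf_alt by (simp only: dot_transpose)
qed

lemma sum_axis1: "(\<Sum>a\<in>UNIV. axis i (1::int) $ a * g a) = g i"
proof -
  have "(\<Sum>a\<in>UNIV. axis i (1::int) $ a * g a) = (\<Sum>a\<in>UNIV. if a = i then g a else 0)"
    by (rule sum.cong) (auto simp: axis_def)
  then show ?thesis by simp
qed
lemma sum_axis2: "(\<Sum>a\<in>UNIV. g a * axis i (1::int) $ a) = g i"
proof -
  have "(\<Sum>a\<in>UNIV. g a * axis i (1::int) $ a) = (\<Sum>a\<in>UNIV. if a = i then g a else 0)"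
    by (rule sum.cong) (auto simp: axis_def)
  then show ?thesis by simp
qed

lemma sf_axis: "symp_form M (axis i 1) (axis j 1) = (M $ i $ j :: int)"
  unfolding symp_form_def by (simp add: sum_axis1 sum_axis2)



lemma mat_eq_sf:
  fixes M N :: "int^'n^'n"
  assumes "\<And>x y. symp_form M x y = symp_form N x y" shows "M = N"
  by (metis assms sf_axis vec_eq_iff)


lemma sf_add1: "symp_form Om (u + v) w = symp_form Om u w + symp_form Om v w"
  unfolding symp_form_def by (simp add: distrib_right sum.distrib)
lemma sf_add2: "symp_form Om w (u + v) = symp_form Om w u + symp_form Om w v"
  unfolding symp_form_def by (simp add: distrib_left sum.distrib)

lemma sf_smult1: "symp_form Om (c *s u) w = c * symp_form Om u w"
  unfolding symp_form_def by (simp add: sum_distrib_left mult_ac)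
lemma sf_smult2: "symp_form Om w (c *s u) = c * symp_form Om w u"
  unfolding symp_form_def by (simp add: sum_distrib_left mult_ac)

lemma sf_neg: "symp_form (- Om) u w = - symp_form Om u w"
  unfolding symp_form_def by (simp add: sum_negf)


definition skew :: "int^'n^'n \<Rightarrow> bool" where
  "skew Om \<longleftrightarrow> (\<forall>i j. Om $ j $ i = - Om $ i $ j)"

lemma skewD: "skew Om \<Longrightarrow> Om $ j $ i = - Om $ i $ j"
  unfolding skew_def by blast

lemma skew_neg: assumes "skew Om" shows "skew (- Om)"
  unfolding skew_def
proof (intro allI)
  fix i j
  have "Om $ j $ i = - Om $ i $ j" by (rule skewD[OF assms])
  then show "(- Om) $ j $ i = - (- Om) $ i $ j" by simp
qed


lemma sf_skew: assumes "skew Om" shows "symp_form Om u v = - symp_form Om v u"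
proof -
  have h: "v $ j * Om $ j $ i * u $ i = - (u $ i * Om $ i $ j * v $ j)" for i j
  proof -
    have "Om $ j $ i = - Om $ i $ j" by (rule skewD[OF assms])
    then show ?thesis by (simp add: mult_ac)
  qed
  have "symp_form Om v u = (\<Sum>i\<in>UNIV. \<Sum>j\<in>UNIV. v $ j * Om $ j $ i * u $ i)"
    unfolding symp_form_def by (rule sum.swap)
  also have "\<dots> = (\<Sum>i\<in>UNIV. \<Sum>j\<in>UNIV. - (u $ i * Om $ i $ j * v $ j))"
    by (simp only: h)
  also have "\<dots> = - symp_form Om u v"
    unfolding symp_form_def by (simp add: sum_negf)
  finally show ?thesis by simp
qed

lemma sf_self: assumes "skew Om" shows "symp_form Om v v = 0"
  using sf_skew[OF assms, of v v] by simp



lemma sum_axis3: "(\<Sum>i\<in>UNIV. x $ i * axis i (1::int) $ j) = x $ j"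
proof -
  have "(\<Sum>i\<in>UNIV. x $ i * axis i (1::int) $ j) = (\<Sum>i\<in>UNIV. if i = j then x $ i else 0)"
    by (rule sum.cong) (auto simp: axis_def)
  then show ?thesis by simp
qed

lemma sf_axis_right: "symp_form Om v (axis i 1) = (v v* Om) $ i"
  unfolding sf_alt by (simp add: sum_axis2)

lemma transv_row: "x v* transvection Om v = transv_map Om v x"
unfolding vec_eq_iff proof (intro allI)
  fix j
  have "(x v* transvection Om v) $ j = (\<Sum>i\<in>UNIV. x$i * axis i 1 $ j) + (\<Sum>i\<in>UNIV. x$i * (v v* Om)$i) * v$j"
    unfolding transvection_def transv_map_def vector_matrix_mult_def[of x]
    by (simp add: sf_axis_right distrib_left sum.distrib sum_distrib_right sum_distrib_left mult_ac)
  also have "\<dots> = x $ j + symp_form Om v x * v $ j"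
    by (simp add: sum_axis3 sf_alt mult_ac)
  finally show "(x v* transvection Om v) $ j = transv_map Om v x $ j"
    unfolding transv_map_def by simp
qed


lemma conj_transv:
  fixes C Ci Om :: "int^'n^'n"
  assumes "C ** Ci = mat 1" "Ci ** C = mat 1"
  shows "C ** transvection Om v ** Ci = transvection (C ** Om ** transpose C) (v v* Ci)"
proof (rule mat_eq_rows)
  fix x :: "int^'n"
  have "x v* (C ** transvection Om v ** Ci) = ((x v* C) v* transvection Om v) v* Ci"
    by (simp only: vector_matrix_mul_assoc)
  also have "\<dots> = transv_map Om v (x v* C) v* Ci" by (simp only: transv_row)
  also have "\<dots> = x + symp_form Om v (x v* C) *s (v v* Ci)"
    unfolding transv_map_def by (simp add: add_vm smult_vm vector_matrix_mul_assoc assms)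
  also have "\<dots> = x v* transvection (C ** Om ** transpose C) (v v* Ci)"
    unfolding transv_row transv_map_def by (simp add: sf_conj vector_matrix_mul_assoc assms)
  finally show "x v* (C ** transvection Om v ** Ci) = x v* transvection (C ** Om ** transpose C) (v v* Ci)" .
qed

lemma transv_symp:
  fixes Om Om2 :: "int^'n^'n"
  assumes sk: "skew Om" and h: "\<And>x. symp_form Om2 v x = k * symp_form Om v x"
  shows "transvection Om2 v ** Om ** transpose (transvection Om2 v) = Om"
proof (rule mat_eq_sf)
  fix x y :: "int^'n"
  have s1: "symp_form Om x v = - symp_form Om v x" by (rule sf_skew[OF sk])
  have s2: "symp_form Om y v = - symp_form Om v y" by (rule sf_skew[OF sk])
  show "symp_form (transvection Om2 v ** Om ** transpose (transvection Om2 v)) x y = symp_form Om x y"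
    unfolding sf_conj transv_row transv_map_def
    by (simp add: sf_add1 sf_add2 sf_smult1 sf_smult2 sf_self[OF sk] h s1 s2 algebra_simps)
qed

lemma transv_inv1:
  fixes Om :: "int^'n^'n"
  assumes sk: "skew Om"
  shows "transvection Om v ** transvection (- Om) v = mat 1"
proof (rule mat_eq_rows)
  fix x :: "int^'n"
  have "x v* (transvection Om v ** transvection (- Om) v) = (x v* transvection Om v) v* transvection (- Om) v"
    by (simp only: vector_matrix_mul_assoc)
  also have "\<dots> = x"
    unfolding transv_row transv_map_def
    by (simp add: sf_neg sf_add2 sf_smult2 sf_self[OF sk] algebra_simps) (simp add: vec_eq_iff)
  finally show "x v* (transvection Om v ** transvection (- Om) v) = x v* mat 1" by simp
qed

lemma transv_inv:
  fixes Om :: "int^'n^'n"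
  assumes sk: "skew Om"
  shows "transvection Om v ** transvection (- Om) v = mat 1"
    "transvection (- Om) v ** transvection Om v = mat 1"
    "invertible (transvection Om v)"
    "matrix_inv (transvection Om v) = transvection (- Om) v"
proof -
  show 1: "transvection Om v ** transvection (- Om) v = mat 1" by (rule transv_inv1[OF sk])
  show 2: "transvection (- Om) v ** transvection Om v = mat 1"
    using transv_inv1[OF skew_neg[OF sk], of v] by simp
  show "invertible (transvection Om v)" unfolding invertible_def using 1 2 by blast
  show "matrix_inv (transvection Om v) = transvection (- Om) v" by (rule inv_unique[OF 1 2])
qed

lemma inv_mult:
  fixes A B :: "'r::semiring_1^'n^'n"
  assumes "invertible A" "invertible B"
  shows "invertible (A ** B)" "matrix_inv (A ** B) = matrix_inv B ** matrix_inv A"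
proof -
  show "invertible (A ** B)" by (rule invertible_mult[OF assms])
  have a1: "A ** matrix_inv A = mat 1" "matrix_inv A ** A = mat 1" using invertible_inv[OF assms(1)] by auto
  have b1: "B ** matrix_inv B = mat 1" "matrix_inv B ** B = mat 1" using invertible_inv[OF assms(2)] by auto
  have "(A ** B) ** (matrix_inv B ** matrix_inv A) = A ** (B ** matrix_inv B) ** matrix_inv A"
    by (simp add: matrix_mul_assoc)
  then have c1: "(A ** B) ** (matrix_inv B ** matrix_inv A) = mat 1" using a1 b1 by simp
  have "(matrix_inv B ** matrix_inv A) ** (A ** B) = matrix_inv B ** (matrix_inv A ** A) ** B"
    by (simp add: matrix_mul_assoc)
  then have c2: "(matrix_inv B ** matrix_inv A) ** (A ** B) = mat 1" using a1 b1 by simp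
  show "matrix_inv (A ** B) = matrix_inv B ** matrix_inv A" by (rule inv_unique[OF c1 c2])
qed

lemma inv_inv:
  fixes A :: "'r::semiring_1^'n^'n"
  assumes "invertible A"
  shows "invertible (matrix_inv A)" "matrix_inv (matrix_inv A) = A"
  using invertible_inv[OF assms] inv_unique[of "matrix_inv A" A] unfolding invertible_def by blast+

lemma inv_one: "matrix_inv (mat 1 :: 'r::semiring_1^'n^'n) = mat 1" "invertible (mat 1 :: 'r::semiring_1^'n^'n)"
  using inv_unique[of "mat 1::'r::semiring_1^'n^'n" "mat 1"] unfolding invertible_def by auto

lemma gg_mult: "g \<in> gen_group S \<Longrightarrow> h \<in> gen_group S \<Longrightarrow> g ** h \<in> gen_group S"
proof (induction g rule: gen_group.induct)
  case one then show ?case by simp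
next
  case (mul s g) then show ?case using gen_group.mul[of s S "g ** h"] by (simp add: matrix_mul_assoc)
next
  case (inv s g) then show ?case using gen_group.inv[of s S "g ** h"] by (simp add: matrix_mul_assoc)
qed

lemma gg_gen: "s \<in> S \<Longrightarrow> s \<in> gen_group S"
  using gen_group.mul[OF _ gen_group.one, of s S] by simp

lemma gg_geninv: "s \<in> S \<Longrightarrow> matrix_inv s \<in> gen_group S"
  using gen_group.inv[OF _ gen_group.one, of s S] by simp

lemma gg_inv:
  assumes "\<forall>s\<in>S. invertible s" "g \<in> gen_group S"
  shows "invertible g \<and> matrix_inv g \<in> gen_group S"
  using assms(2)
proof (induction g rule: gen_group.induct)
  case one then show ?case using inv_one gen_group.one by metis
next
  case (mul s g)
  have si: "invertible s" using assms(1) mul by blast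
  show ?case using inv_mult[OF si] mul gg_mult gg_geninv by metis
next
  case (inv s g)
  have si: "invertible s" using assms(1) inv by blast
  show ?case using inv_mult[OF inv_inv(1)[OF si]] inv_inv(2)[OF si] inv gg_mult gg_gen by metis
qed

lemma gg_subset:
  assumes "\<forall>s\<in>S2. invertible s" "S1 \<subseteq> gen_group S2"
  shows "gen_group S1 \<subseteq> gen_group S2"
proof
  fix g assume "g \<in> gen_group S1"
  then show "g \<in> gen_group S2"
  proof (induction g rule: gen_group.induct)
    case one then show ?case by (rule gen_group.one)
  next
    case (mul s g) then show ?case using assms gg_mult by blast
  next
    case (inv s g) then show ?case using assms gg_mult gg_inv by blast
  qed
qed

lemma gg_conj:
  fixes C Ci :: "int^'n^'n"
  assumes "\<forall>s\<in>S. invertible s" "C ** Ci = mat 1" "Ci ** C = mat 1" "g \<in> gen_group S"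
  shows "C ** g ** Ci \<in> gen_group ((\<lambda>s. C ** s ** Ci) ` S)"
  using assms(4)
proof (induction g rule: gen_group.induct)
  case one
  have "C ** mat 1 ** Ci = mat 1" using assms by simp
  then show ?case using gen_group.one by metis
next
  case (mul s g)
  have e: "C ** (s ** g) ** Ci = (C ** s ** Ci) ** (C ** g ** Ci)"
  proof -
    have "(C ** s ** Ci) ** (C ** g ** Ci) = C ** s ** (Ci ** C) ** g ** Ci" by (simp add: matrix_mul_assoc)
    then show ?thesis using assms by (simp add: matrix_mul_assoc)
  qed
  show ?case unfolding e apply (rule gen_group.mul) using mul by auto
next
  case (inv s g)
  have si: "invertible s" using assms(1) inv by blast
  note sinv = invertible_inv[OF si]
  have i1: "(C ** s ** Ci) ** (C ** matrix_inv s ** Ci) = mat 1"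
  proof -
    have "(C ** s ** Ci) ** (C ** matrix_inv s ** Ci) = C ** (s ** (Ci ** C) ** matrix_inv s) ** Ci"
      by (simp add: matrix_mul_assoc)
    then show ?thesis using assms sinv by simp
  qed
  have i2: "(C ** matrix_inv s ** Ci) ** (C ** s ** Ci) = mat 1"
  proof -
    have "(C ** matrix_inv s ** Ci) ** (C ** s ** Ci) = C ** (matrix_inv s ** (Ci ** C) ** s) ** Ci"
      by (simp add: matrix_mul_assoc)
    then show ?thesis using assms sinv by simp
  qed
  have mi: "matrix_inv (C ** s ** Ci) = C ** matrix_inv s ** Ci" by (rule inv_unique[OF i1 i2])
  have e: "C ** (matrix_inv s ** g) ** Ci = matrix_inv (C ** s ** Ci) ** (C ** g ** Ci)"
  proof -
    have "(C ** matrix_inv s ** Ci) ** (C ** g ** Ci) = C ** matrix_inv s ** (Ci ** C) ** g ** Ci" by (simp add: matrix_mul_assoc)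
    then show ?thesis using assms mi by (simp add: matrix_mul_assoc)
  qed
  show ?case unfolding e apply (rule gen_group.inv) using inv by auto
qed


lemma tg_invertible:
  assumes "skew Om"
  shows "\<forall>s\<in>{transvection Om (axis a 1) | a. True}. invertible s"
  using transv_inv(3)[OF assms] by blast

lemma tg_conj:
  fixes C Ci Om :: "int^'n^'n"
  assumes sk: "skew Om" and c: "C ** Ci = mat 1" "Ci ** C = mat 1" and g: "g \<in> transv_group Om"
  shows "C ** g ** Ci \<in> gen_group {transvection (C ** Om ** transpose C) (axis a 1 v* Ci) | a. True}"
proof -
  have "C ** g ** Ci \<in> gen_group ((\<lambda>s. C ** s ** Ci) ` {transvection Om (axis a 1) | a. True})"
    by (rule gg_conj[OF tg_invertible[OF sk] c g[unfolded transv_group_def]])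
  moreover have "(\<lambda>s. C ** s ** Ci) ` {transvection Om (axis a 1) | a. True}
     = {transvection (C ** Om ** transpose C) (axis a 1 v* Ci) | a. True}"
  proof -
    have 1: "{transvection Om (axis a 1) | a. True} = (\<lambda>a. transvection Om (axis a 1)) ` UNIV" by auto
    have 2: "{transvection (C ** Om ** transpose C) (axis a 1 v* Ci) | a. True}
       = (\<lambda>a. transvection (C ** Om ** transpose C) (axis a 1 v* Ci)) ` UNIV" by auto
    show ?thesis unfolding 1 2 image_image conj_transv[OF c] ..
  qed
  ultimately show ?thesis by simp
qed

lemma tg_transfer:
  assumes sk: "skew Om" and g: "g \<in> gen_group {transvection Om (f a) | a. True}"
    and h: "\<And>a. transvection Om (f a) \<in> transv_group Om"
  shows "g \<in> transv_group Om"
proof -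
  have "gen_group {transvection Om (f a) | a. True} \<subseteq> transv_group Om"
    unfolding transv_group_def by (rule gg_subset[OF tg_invertible[OF sk]]) (use h in \<open>auto simp: transv_group_def\<close>)
  then show ?thesis using g by blast
qed

lemma tg_mult: "g \<in> transv_group Om \<Longrightarrow> h \<in> transv_group Om \<Longrightarrow> g ** h \<in> transv_group Om"
  unfolding transv_group_def by (rule gg_mult)

lemma tg_gen: "transvection Om (axis a 1) \<in> transv_group Om"
  unfolding transv_group_def by (rule gg_gen) blast

lemma tg_geninv: "matrix_inv (transvection Om (axis a 1)) \<in> transv_group Om"
  unfolding transv_group_def by (rule gg_geninv) blast

lemma tg_key:
  fixes Om :: "int^'n^'n"
  assumes sk: "skew Om" and c: "Om $ w $ l = 1 \<or> Om $ w $ l = -1" and cc: "cc = 1 \<or> cc = -1"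
  shows "transvection Om (axis l 1 + cc *s axis w 1) \<in> transv_group Om"
proof -
  define Tw where "Tw = transvection Om (axis w 1)"
  define Twi where "Twi = transvection (- Om) (axis w (1::int))"
  have i1: "Tw ** Twi = mat 1" "Twi ** Tw = mat 1" unfolding Tw_def Twi_def using transv_inv[OF sk] by auto
  have mi: "matrix_inv Tw = Twi" unfolding Tw_def Twi_def using transv_inv[OF sk] by auto
  have sy1: "Tw ** Om ** transpose Tw = Om" unfolding Tw_def
    by (rule transv_symp[OF sk, where k=1]) simp
  have sy2: "Twi ** Om ** transpose Twi = Om" unfolding Twi_def
    by (rule transv_symp[OF sk, where k="-1"]) (simp add: sf_neg)
  have m1: "Tw ** transvection Om (axis l 1) ** Twi \<in> transv_group Om"
    using tg_mult tg_gen tg_geninv mi unfolding Tw_def by metis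
  have m2: "Twi ** transvection Om (axis l 1) ** Tw \<in> transv_group Om"
    using tg_mult tg_gen tg_geninv mi unfolding Tw_def by metis
  have e1: "Tw ** transvection Om (axis l 1) ** Twi = transvection Om (axis l 1 + (- Om $ w $ l) *s axis w 1)"
    using conj_transv[OF i1, of Om "axis l 1"] sy1
    unfolding Twi_def transv_row transv_map_def by (simp add: sf_neg sf_axis)
  have e2: "Twi ** transvection Om (axis l 1) ** Tw = transvection Om (axis l 1 + (Om $ w $ l) *s axis w 1)"
    using conj_transv[OF i1(2) i1(1), of Om "axis l 1"] sy2
    unfolding Tw_def transv_row transv_map_def by (simp add: sf_axis)
  show ?thesis using m1 m2 e1 e2 c cc by auto
qed

lemma vm_elem: "x v* elem_mat l w = (x $ l) *s axis w (1::int)"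
  unfolding vec_eq_iff
proof
  fix j
  have "(x v* elem_mat l w) $ j = (\<Sum>i\<in>UNIV. if i = l then (if j = w then x $ i else 0) else 0)"
    unfolding vector_matrix_mult_def elem_mat_def vec_lambda_beta by (intro sum.cong refl) auto
  also have "\<dots> = (if j = w then x $ l else 0)" by simp
  finally show "(x v* elem_mat l w) $ j = ((x $ l) *s axis w (1::int)) $ j"
    by (simp add: axis_def)
qed

lemma elem_inv:
  fixes l w :: "'n::finite"
  assumes "l \<noteq> w"
  shows "(mat 1 + elem_mat l w) ** (mat 1 - elem_mat l w) = (mat 1 :: int^'n^'n)"
    "(mat 1 - elem_mat l w) ** (mat 1 + elem_mat l w) = (mat 1 :: int^'n^'n)"
proof -
  have z: "(axis w (1::int)) $ l = 0" using assms by (simp add: axis_def)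
  show "(mat 1 + elem_mat l w) ** (mat 1 - elem_mat l w) = (mat 1 :: int^'n^'n)"
    apply (rule mat_eq_rows)
    apply (simp only: vector_matrix_mul_assoc[symmetric])
    apply (simp add: vector_matrix_mult_add_rdistrib vector_matrix_mult_diff_rdistrib vm_elem z)
    done
  show "(mat 1 - elem_mat l w) ** (mat 1 + elem_mat l w) = (mat 1 :: int^'n^'n)"
    apply (rule mat_eq_rows)
    apply (simp only: vector_matrix_mul_assoc[symmetric])
    apply (simp add: vector_matrix_mult_add_rdistrib vector_matrix_mult_diff_rdistrib vm_elem z)
    done
qed

lemma axis_A:
  fixes l w :: "'n::finite"
  shows "axis a 1 v* (mat 1 + elem_mat l w) = axis a 1 + (if a = l then 1 else 0) *s axis w (1::int)"
    "axis a 1 v* (mat 1 - elem_mat l w) = axis a 1 + (if a = l then -1 else 0) *s axis w (1::int)"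
  by (auto simp: vector_matrix_mult_add_rdistrib vector_matrix_mult_diff_rdistrib vm_elem vec_eq_iff axis_def)


lemma skew_conj:
  fixes C Om :: "int^'n^'n"
  assumes sk: "skew Om"
  shows "skew (C ** Om ** transpose C)"
  unfolding skew_def
proof (intro allI)
  fix i j
  have "(C ** Om ** transpose C) $ j $ i = symp_form Om (axis j 1 v* C) (axis i 1 v* C)"
    by (simp only: sf_axis[symmetric] sf_conj)
  also have "\<dots> = - symp_form Om (axis i 1 v* C) (axis j 1 v* C)" by (rule sf_skew[OF sk])
  also have "\<dots> = - (C ** Om ** transpose C) $ i $ j"
    by (simp only: sf_axis[symmetric] sf_conj)
  finally show "(C ** Om ** transpose C) $ j $ i = - (C ** Om ** transpose C) $ i $ j" .
qed

lemma conj_back: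
  fixes C Ci Om :: "int^'n^'n"
  assumes "C ** Ci = mat 1" "Ci ** C = mat 1"
  shows "Ci ** (C ** Om ** transpose C) ** transpose Ci = Om"
proof -
  have t: "transpose C ** transpose Ci = mat 1"
    by (metis matrix_transpose_mul assms(2) transpose_mat)
  have "Ci ** (C ** Om ** transpose C) ** transpose Ci = (Ci ** C) ** Om ** (transpose C ** transpose Ci)"
    by (simp add: matrix_mul_assoc)
  then show ?thesis using assms t by simp
qed

lemma conj_entry:
  fixes M :: "int^'n^'n"
  shows "((mat 1 + elem_mat l w) ** M ** transpose (mat 1 + elem_mat l w)) $ a $ b =
    M $ a $ b + (if a = l then M $ w $ b else 0) + (if b = l then M $ a $ w else 0)
    + (if a = l \<and> b = l then M $ w $ w else 0)"
proof -
  have "((mat 1 + elem_mat l w) ** M ** transpose (mat 1 + elem_mat l w)) $ a $ b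
     = symp_form M (axis a 1 v* (mat 1 + elem_mat l w)) (axis b 1 v* (mat 1 + elem_mat l w))"
    by (simp only: sf_axis[symmetric] sf_conj)
  also have "\<dots> = M $ a $ b + (if a = l then M $ w $ b else 0) + (if b = l then M $ a $ w else 0)
    + (if a = l \<and> b = l then M $ w $ w else 0)"
    unfolding axis_A by (simp add: sf_add1 sf_add2 sf_smult1 sf_smult2 sf_axis)
  finally show ?thesis .
qed

lemma arrow_groups:
  fixes Oq Or :: "int^'n^'n"
  assumes skq: "skew Oq" and lw: "l \<noteq> w"
    and Or: "Or = (mat 1 + elem_mat l w) ** Oq ** transpose (mat 1 + elem_mat l w)"
    and cq: "Oq $ w $ l = 1 \<or> Oq $ w $ l = -1" and cr: "Or $ w $ l = 1 \<or> Or $ w $ l = -1"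
  shows "\<forall>g\<in>transv_group Oq. (mat 1 + elem_mat l w) ** g ** (mat 1 - elem_mat l w) \<in> transv_group Or"
    "\<forall>g\<in>transv_group Or. (mat 1 - elem_mat l w) ** g ** (mat 1 + elem_mat l w) \<in> transv_group Oq"
proof -
  define A where "A = (mat 1 + elem_mat l w :: int^'n^'n)"
  define Ai where "Ai = (mat 1 - elem_mat l w :: int^'n^'n)"
  have i: "A ** Ai = mat 1" "Ai ** A = mat 1" unfolding A_def Ai_def using elem_inv[OF lw] by auto
  have skr: "skew Or" unfolding Or by (rule skew_conj[OF skq])
  have Oq: "Oq = Ai ** Or ** transpose Ai" unfolding Or A_def[symmetric] using conj_back[OF i] by simp
  show "\<forall>g\<in>transv_group Oq. (mat 1 + elem_mat l w) ** g ** (mat 1 - elem_mat l w) \<in> transv_group Or"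
  proof
    fix g assume g: "g \<in> transv_group Oq"
    have "A ** g ** Ai \<in> gen_group {transvection Or (axis a 1 v* Ai) | a. True}"
      using tg_conj[OF skq i g] unfolding Or A_def[symmetric] .
    moreover have "transvection Or (axis a 1 v* Ai) \<in> transv_group Or" for a
    proof (cases "a = l")
      case True
      then show ?thesis unfolding Ai_def axis_A using tg_key[OF skr cr, of "-1"] by simp
    next
      case False
      then show ?thesis unfolding Ai_def axis_A using tg_gen by simp
    qed
    ultimately have "A ** g ** Ai \<in> transv_group Or" by (rule tg_transfer[OF skr])
    then show "(mat 1 + elem_mat l w) ** g ** (mat 1 - elem_mat l w) \<in> transv_group Or"
      unfolding A_def Ai_def .
  qed
  show "\<forall>g\<in>transv_group Or. (mat 1 - elem_mat l w) ** g ** (mat 1 + elem_mat l w) \<in> transv_group Oq"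
  proof
    fix g assume g: "g \<in> transv_group Or"
    have "Ai ** g ** A \<in> gen_group {transvection Oq (axis a 1 v* A) | a. True}"
      using tg_conj[OF skr i(2) i(1) g] unfolding Oq[symmetric] .
    moreover have "transvection Oq (axis a 1 v* A) \<in> transv_group Oq" for a
    proof (cases "a = l")
      case True
      then show ?thesis unfolding A_def axis_A using tg_key[OF skq cq, of "1"] by simp
    next
      case False
      then show ?thesis unfolding A_def axis_A using tg_gen by simp
    qed
    ultimately have "Ai ** g ** A \<in> transv_group Oq" by (rule tg_transfer[OF skq])
    then show "(mat 1 - elem_mat l w) ** g ** (mat 1 + elem_mat l w) \<in> transv_group Oq"
      unfolding A_def Ai_def .
  qed
qed

lemma Sp_conj:
  fixes C Ci Om S :: "int^'n^'n"
  assumes c: "C ** Ci = mat 1" "Ci ** C = mat 1" and S: "S \<in> Sp Om"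
  shows "C ** S ** Ci \<in> Sp (C ** Om ** transpose C)"
proof -
  have iC: "invertible C" "invertible Ci" using c unfolding invertible_def by blast+
  have iS: "invertible S" and SS: "S ** Om ** transpose S = Om" using S unfolding Sp_def by auto
  have inv: "invertible (C ** S ** Ci)" using invertible_mult iC iS by metis
  have t: "transpose (C ** S ** Ci) = transpose Ci ** transpose S ** transpose C"
    by (simp add: matrix_transpose_mul matrix_mul_assoc)
  have t2: "transpose C ** transpose Ci = mat 1"
    by (metis matrix_transpose_mul c(2) transpose_mat)
  have "(C ** S ** Ci) ** (C ** Om ** transpose C) ** transpose (C ** S ** Ci)
     = C ** S ** (Ci ** C) ** Om ** (transpose C ** transpose Ci) ** transpose S ** transpose C"
    unfolding t by (simp add: matrix_mul_assoc)
  also have "\<dots> = C ** (S ** Om ** transpose S) ** transpose C"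
    using c t2 by (simp add: matrix_mul_assoc)
  also have "\<dots> = C ** Om ** transpose C" using SS by simp
  finally show ?thesis using inv unfolding Sp_def by blast
qed



definition Inv :: "('a::finite) perm_pair \<Rightarrow> bool" where
  "Inv p \<longleftrightarrow> is_perm_pair p \<and> (\<forall>a. fst p a = CARD('a) \<longrightarrow> snd p a \<noteq> CARD('a))"

lemma bij_facts:
  fixes f :: "'a::finite \<Rightarrow> nat"
  assumes "bij_betw f UNIV {1..CARD('a)}"
  shows "inj f" "\<And>a. 1 \<le> f a" "\<And>a. f a \<le> CARD('a)" "f (inv f CARD('a)) = CARD('a)"
proof -
  show "inj f" using assms bij_betw_def by blast
  show "1 \<le> f a" for a using assms bij_betwE by fastforce
  show "f a \<le> CARD('a)" for a using assms bij_betwE by fastforce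
  have "CARD('a) \<in> {1..CARD('a)}" using finite_UNIV_card_ge_0[where 'a='a] by simp
  then show "f (inv f CARD('a)) = CARD('a)" using bij_betw_inv_into_right[OF assms] by simp
qed

lemma bij_from_inj:
  fixes f :: "'a::finite \<Rightarrow> nat"
  assumes "inj f" "\<And>a. 1 \<le> f a" "\<And>a. f a \<le> CARD('a)"
  shows "bij_betw f UNIV {1..CARD('a)}"
proof -
  have sub: "range f \<subseteq> {1..CARD('a)}" using assms by auto
  have "card (range f) = CARD('a)" using assms(1) card_image by blast
  then have "range f = {1..CARD('a)}" using card_subset_eq[OF _ sub] by simp
  then show ?thesis using assms(1) unfolding bij_betw_def by simp
qed

lemma omega_skew: "skew (Omega p)"
  unfolding skew_def Omega_def by auto

lemma omega_diag: "Omega p $ a $ a = 0"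
  unfolding Omega_def by auto

lemma top_omega_entry:
  fixes t s :: "'a::finite \<Rightarrow> nat"
  assumes iT: "inj t" and iS: "inj s" and sd: "\<And>a. s a \<le> d" and td: "\<And>a. t a \<le> d"
    and tw: "t w = d" and sl: "s l = d" and lw: "l \<noteq> w" and k: "k = s w"
  shows "Omega (t, (\<lambda>b. if b = l then k + 1 else if s b \<le> k then s b else s b + 1)) $ a $ b =
    Omega (t, s) $ a $ b + (if a = l then Omega (t, s) $ w $ b else 0) + (if b = l then Omega (t, s) $ a $ w else 0)
    + (if a = l \<and> b = l then Omega (t, s) $ w $ w else 0)"
proof -
  have tl: "t l < d" using iT tw td lw le_neq_implies_less injD by metis
  have sw: "s w < d" using iS sl sd lw le_neq_implies_less injD by metis
  have tx: "x \<noteq> w \<Longrightarrow> t x < d" for x using iT tw td le_neq_implies_less injD by metis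
  have sx: "x \<noteq> l \<Longrightarrow> s x < d" for x using iS sl sd le_neq_implies_less injD by metis
  have tne: "x \<noteq> y \<Longrightarrow> t x \<noteq> t y" for x y using iT injD by metis
  have sne: "x \<noteq> y \<Longrightarrow> s x \<noteq> s y" for x y using iS injD by metis
  show ?thesis
  proof (cases "a = l")
    case al: True
    show ?thesis
    proof (cases "b = l")
      case True
      then show ?thesis using al tl sw tw sl k unfolding Omega_def by simp
    next
      case bl: False
      show ?thesis
      proof (cases "b = w")
        case True
        then show ?thesis using al bl tl sw tw sl k unfolding Omega_def by simp
      next
        case bw: False
        have "t b < d" "s b < d" using tx[OF bw] sx[OF bl] .
        moreover have "t b \<noteq> t l" "s b \<noteq> s w" using tne sne bl bw by metis+
        ultimately show ?thesis using al bl bw tl sw tw sl k unfolding Omega_def by auto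
      qed
    qed
  next
    case al: False
    show ?thesis
    proof (cases "b = l")
      case bl: True
      show ?thesis
      proof (cases "a = w")
        case True
        then show ?thesis using al bl tl sw tw sl k unfolding Omega_def by simp
      next
        case aw: False
        have "t a < d" "s a < d" using tx[OF aw] sx[OF al] .
        moreover have "t a \<noteq> t l" "s a \<noteq> s w" using tne sne al aw by metis+
        ultimately show ?thesis using al bl aw tl sw tw sl k unfolding Omega_def by auto
      qed
    next
      case bl: False
      have "s a < d" "s b < d" using sx al bl by auto
      then show ?thesis using al bl unfolding Omega_def by auto
    qed
  qed
qed


lemma top_struct:
  fixes p :: "('a::finite) perm_pair"
  assumes "Inv p"
  defines "w \<equiv> alpha_t p CARD('a)" and "l \<equiv> alpha_b p CARD('a)"
  shows "fst p w = CARD('a)" "snd p l = CARD('a)" "l \<noteq> w" "snd p w < CARD('a)"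
    "rauzy_top p = (fst p, (\<lambda>b. if b = l then snd p w + 1 else if snd p b \<le> snd p w then snd p b else snd p b + 1))"
    "winner True p = w" "loser True p = l"
proof -
  have bt: "bij_betw (fst p) UNIV {1..CARD('a)}" and bs: "bij_betw (snd p) UNIV {1..CARD('a)}"
    and c: "\<forall>a. fst p a = CARD('a) \<longrightarrow> snd p a \<noteq> CARD('a)"
    using assms(1) unfolding Inv_def is_perm_pair_def by auto
  show fw: "fst p w = CARD('a)" unfolding w_def alpha_t_def using bij_facts(4)[OF bt] .
  show sl: "snd p l = CARD('a)" unfolding l_def alpha_b_def using bij_facts(4)[OF bs] .
  show "l \<noteq> w" using fw sl c by metis
  show "snd p w < CARD('a)" using c fw bij_facts(3)[OF bs, of w] by (metis le_neq_implies_less)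
  show "rauzy_top p = (fst p, (\<lambda>b. if b = l then snd p w + 1 else if snd p b \<le> snd p w then snd p b else snd p b + 1))"
    unfolding rauzy_top_def w_def l_def Let_def by simp
  show "winner True p = w" "loser True p = l" unfolding winner_def loser_def w_def l_def by simp_all
qed

definition Fent :: "int^'a^'a \<Rightarrow> 'a::finite \<Rightarrow> 'a \<Rightarrow> 'a \<Rightarrow> 'a \<Rightarrow> int" where
  "Fent M w l a b = M $ a $ b + (if a = l then M $ w $ b else 0) + (if b = l then M $ a $ w else 0)
    + (if a = l \<and> b = l then M $ w $ w else 0)"

lemma top_omega:
  fixes p :: "('a::finite) perm_pair"
  assumes "Inv p"
  shows "Omega (rauzy_top p) $ a $ b = Fent (Omega p) (winner True p) (loser True p) a b"
proof -
  note st = top_struct[OF assms]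
  have bt: "bij_betw (fst p) UNIV {1..CARD('a)}" and bs: "bij_betw (snd p) UNIV {1..CARD('a)}"
    using assms(1) unfolding Inv_def is_perm_pair_def by auto
  have e: "Omega (fst p, (\<lambda>b. if b = loser True p then snd p (winner True p) + 1
      else if snd p b \<le> snd p (winner True p) then snd p b else snd p b + 1)) $ a $ b =
    Omega (fst p, snd p) $ a $ b + (if a = loser True p then Omega (fst p, snd p) $ (winner True p) $ b else 0)
    + (if b = loser True p then Omega (fst p, snd p) $ a $ (winner True p) else 0)
    + (if a = loser True p \<and> b = loser True p then Omega (fst p, snd p) $ (winner True p) $ (winner True p) else 0)"
    unfolding st(6) st(7)
    by (rule top_omega_entry[OF bij_facts(1)[OF bt] bij_facts(1)[OF bs] bij_facts(3)[OF bs] bij_facts(3)[OF bt] st(1) st(2) st(3) refl])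
  show ?thesis
    unfolding st(5) Fent_def using e unfolding prod.collapse st(6) st(7) .
qed

lemma top_Inv:
  fixes p :: "('a::finite) perm_pair"
  assumes "Inv p"
  shows "Inv (rauzy_top p)"
proof -
  note st = top_struct[OF assms]
  define w where "w = alpha_t p CARD('a)"
  define l where "l = alpha_b p CARD('a)"
  define k where "k = snd p w"
  have bt: "bij_betw (fst p) UNIV {1..CARD('a)}" and bs: "bij_betw (snd p) UNIV {1..CARD('a)}"
    using assms(1) unfolding Inv_def is_perm_pair_def by auto
  have fw: "fst p w = CARD('a)" and sl: "snd p l = CARD('a)" and lw: "l \<noteq> w" and kd: "k < CARD('a)"
    using st unfolding w_def l_def k_def by auto
  define s' where "s' = (\<lambda>b. if b = l then k + 1 else if snd p b \<le> k then snd p b else snd p b + 1)"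
  have rt: "rauzy_top p = (fst p, s')" using st(5) unfolding s'_def k_def w_def l_def by simp
  have sx: "x \<noteq> l \<Longrightarrow> snd p x < CARD('a)" for x
    using bij_facts(1,3)[OF bs] sl le_neq_implies_less injD by metis
  have sne: "x \<noteq> y \<Longrightarrow> snd p x \<noteq> snd p y" for x y using bij_facts(1)[OF bs] injD by metis
  have tx: "fst p x = CARD('a) \<Longrightarrow> x = w" for x using bij_facts(1)[OF bt] fw injD by metis
  have inj: "inj s'"
  proof (rule injI)
    fix x y assume e: "s' x = s' y"
    show "x = y"
    proof (rule ccontr)
      assume xy: "x \<noteq> y"
      have "snd p x \<noteq> snd p y" using sne xy .
      then show False using e xy sx[of x] sx[of y] unfolding s'_def by (auto split: if_splits)
    qed
  qed
  have b1: "1 \<le> s' a" for a using bij_facts(2)[OF bs, of a] unfolding s'_def by auto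
  have b2: "s' a \<le> CARD('a)" for a using kd sx[of a] unfolding s'_def by auto
  have "bij_betw s' UNIV {1..CARD('a)}" by (rule bij_from_inj[OF inj b1 b2])
  moreover have "\<forall>a. fst p a = CARD('a) \<longrightarrow> s' a \<noteq> CARD('a)"
  proof (intro allI impI)
    fix a assume "fst p a = CARD('a)"
    then have "a = w" by (rule tx)
    then show "s' a \<noteq> CARD('a)" using lw kd unfolding s'_def k_def by auto
  qed
  ultimately show ?thesis using bt unfolding Inv_def is_perm_pair_def rt by simp
qed

lemma top_wl:
  fixes p :: "('a::finite) perm_pair"
  assumes "Inv p"
  shows "Omega p $ winner True p $ loser True p = -1"
proof -
  note st = top_struct[OF assms]
  have bt: "bij_betw (fst p) UNIV {1..CARD('a)}"
    using assms(1) unfolding Inv_def is_perm_pair_def by auto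
  have "fst p (alpha_b p CARD('a)) < CARD('a)"
    using bij_facts(1,3)[OF bt] st(1) st(3) le_neq_implies_less injD by metis
  then show ?thesis unfolding st(6) st(7) Omega_def using st(1,2,4) by simp
qed

definition sw :: "'x perm_pair \<Rightarrow> 'x perm_pair" where "sw p = (snd p, fst p)"

lemma omega_sw: "Omega (sw p) = - Omega p"
  unfolding vec_eq_iff Omega_def sw_def by auto

lemma bot_sw: "rauzy_bot p = sw (rauzy_top (sw p))"
  by (cases p) (simp add: rauzy_bot_def rauzy_top_def sw_def alpha_t_def alpha_b_def Let_def cong: if_cong)

lemma wl_sw: "winner False p = winner True (sw p)" "loser False p = loser True (sw p)"
  unfolding winner_def loser_def sw_def alpha_t_def alpha_b_def by simp_all

lemma Inv_sw: "Inv p \<Longrightarrow> Inv (sw p)"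
  unfolding Inv_def is_perm_pair_def sw_def by auto

lemma arrow_all:
  fixes p :: "('a::finite) perm_pair"
  assumes "Inv p"
  shows "Inv (rauzy_op eps p)" "loser eps p \<noteq> winner eps p"
    "\<And>a b. Omega (rauzy_op eps p) $ a $ b = Fent (Omega p) (winner eps p) (loser eps p) a b"
    "Omega p $ winner eps p $ loser eps p = 1 \<or> Omega p $ winner eps p $ loser eps p = -1"
proof -
  have A: "Inv (rauzy_op eps p) \<and> loser eps p \<noteq> winner eps p \<and>
    (\<forall>a b. Omega (rauzy_op eps p) $ a $ b = Fent (Omega p) (winner eps p) (loser eps p) a b) \<and>
    (Omega p $ winner eps p $ loser eps p = 1 \<or> Omega p $ winner eps p $ loser eps p = -1)"
  proof (cases eps)
    case True
    then show ?thesis using top_Inv[OF assms] top_struct(3,6,7)[OF assms] top_omega[OF assms] top_wl[OF assms]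
      unfolding rauzy_op_def by auto
  next
    case False
    have s: "Inv (sw p)" by (rule Inv_sw[OF assms])
    have "Inv (sw (rauzy_top (sw p)))" using Inv_sw[OF top_Inv[OF s]] .
    moreover have "loser True (sw p) \<noteq> winner True (sw p)" using top_struct(3,6,7)[OF s] by simp
    moreover have "Omega (sw (rauzy_top (sw p))) $ a $ b = Fent (Omega p) (winner True (sw p)) (loser True (sw p)) a b" for a b
      using top_omega[OF s, of a b] unfolding omega_sw Fent_def by simp
    moreover have "Omega p $ winner True (sw p) $ loser True (sw p) = 1"
      using top_wl[OF s] unfolding omega_sw by simp
    ultimately show ?thesis using False unfolding rauzy_op_def bot_sw by (simp add: wl_sw)
  qed
  then show "Inv (rauzy_op eps p)" "loser eps p \<noteq> winner eps p"
    "\<And>a b. Omega (rauzy_op eps p) $ a $ b = Fent (Omega p) (winner eps p) (loser eps p) a b"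
    "Omega p $ winner eps p $ loser eps p = 1 \<or> Omega p $ winner eps p $ loser eps p = -1"
    by blast+
qed


lemma arrow_mat:
  fixes p :: "('a::finite) perm_pair"
  assumes "Inv p"
  shows "Omega (rauzy_op eps p) = B_arrow eps p ** Omega p ** transpose (B_arrow eps p)"
  unfolding vec_eq_iff B_arrow_def conj_entry arrow_all(3)[OF assms] Fent_def by simp

lemma arrow_inst:
  fixes p :: "('a::finite) perm_pair" and eps :: bool
  assumes "Inv p"
  defines "A \<equiv> B_arrow eps p" and "Ai \<equiv> mat 1 - elem_mat (loser eps p) (winner eps p)"
  shows "A ** Ai = mat 1" "Ai ** A = mat 1" "invertible A" "matrix_inv A = Ai"
    "\<forall>g\<in>transv_group (Omega p). A ** g ** Ai \<in> transv_group (Omega (rauzy_op eps p))"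
    "\<forall>g\<in>transv_group (Omega (rauzy_op eps p)). Ai ** g ** A \<in> transv_group (Omega p)"
proof -
  note aa = arrow_all[OF assms(1), of eps]
  show i1: "A ** Ai = mat 1" "Ai ** A = mat 1" unfolding A_def Ai_def B_arrow_def using elem_inv[OF aa(2)] by auto
  then show "invertible A" unfolding invertible_def by blast
  show "matrix_inv A = Ai" by (rule inv_unique[OF i1])
  have cr: "Omega (rauzy_op eps p) $ winner eps p $ loser eps p = 1 \<or> Omega (rauzy_op eps p) $ winner eps p $ loser eps p = -1"
    using aa(4) aa(2) unfolding aa(3) Fent_def by (simp add: omega_diag)
  note ag = arrow_groups[OF omega_skew aa(2) arrow_mat[OF assms(1), of eps, unfolded B_arrow_def] aa(4) cr]
  show "\<forall>g\<in>transv_group (Omega p). A ** g ** Ai \<in> transv_group (Omega (rauzy_op eps p))"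
    "\<forall>g\<in>transv_group (Omega (rauzy_op eps p)). Ai ** g ** A \<in> transv_group (Omega p)"
    using ag unfolding A_def Ai_def B_arrow_def by auto
qed

lemma irr_Inv:
  fixes p :: "('a::finite) perm_pair"
  assumes pp: "is_perm_pair p" and irr: "irreducible_perm p" and c: "CARD('a) \<ge> 2"
  shows "Inv p"
proof -
  have bt: "bij_betw (fst p) UNIV {1..CARD('a)}" and bs: "bij_betw (snd p) UNIV {1..CARD('a)}"
    using pp unfolding is_perm_pair_def by auto
  have "\<forall>a. fst p a = CARD('a) \<longrightarrow> snd p a \<noteq> CARD('a)"
  proof (intro allI impI notI)
    fix a assume fa: "fst p a = CARD('a)" and sa: "snd p a = CARD('a)"
    have "{x. fst p x \<le> CARD('a) - 1} = {x. snd p x \<le> CARD('a) - 1}"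
    proof -
      have ne1: "fst p x \<noteq> CARD('a)" if "x \<noteq> a" for x
        using that fa injD[OF bij_facts(1)[OF bt], of x a] by metis
      have ne2: "snd p x \<noteq> CARD('a)" if "x \<noteq> a" for x
        using that sa injD[OF bij_facts(1)[OF bs], of x a] by metis
      have "fst p x \<le> CARD('a) - 1 \<longleftrightarrow> x \<noteq> a" for x
        using bij_facts(3)[OF bt, of x] fa c ne1[of x] by (cases "x = a") auto
      moreover have "snd p x \<le> CARD('a) - 1 \<longleftrightarrow> x \<noteq> a" for x
        using bij_facts(3)[OF bs, of x] sa c ne2[of x] by (cases "x = a") auto
      ultimately show ?thesis by auto
    qed
    moreover have "1 \<le> CARD('a) - 1 \<and> CARD('a) - 1 < CARD('a)" using c by auto
    ultimately show False using irr unfolding irreducible_perm_def by blast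
  qed
  then show ?thesis using pp unfolding Inv_def by simp
qed

lemma class_Inv:
  fixes p0 :: "('a::finite) perm_pair"
  assumes pp: "is_perm_pair p0" and irr: "irreducible_perm p0" and c: "CARD('a) \<ge> 2"
    and p: "p \<in> rauzy_class p0"
  shows "Inv p"
proof -
  have "(p0, p) \<in> (rauzy_arrows \<union> rauzy_arrows\<inverse>)\<^sup>*" using p unfolding rauzy_class_def by simp
  then show ?thesis
  proof (induction rule: rtrancl_induct)
    case base then show ?case using irr_Inv[OF pp irr c] .
  next
    case (step y z)
    then show ?case
    proof (cases "(y, z) \<in> rauzy_arrows")
      case True
      then obtain eps where "z = rauzy_op eps y" "is_perm_pair y" "irreducible_perm y"
        unfolding rauzy_arrows_def by blast
      then show ?thesis using arrow_all(1) irr_Inv c by metis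
    next
      case False
      then have "(z, y) \<in> rauzy_arrows" using step by auto
      then have "is_perm_pair z" "irreducible_perm z" unfolding rauzy_arrows_def by auto
      then show ?thesis using irr_Inv c by metis
    qed
  qed
qed

lemma walk_main:
  fixes p q :: "('a::finite) perm_pair"
  assumes R: "\<forall>x\<in>R. Inv x" and w: "rauzy_walk R p B q"
  shows "invertible B \<and> Omega q = B ** Omega p ** transpose B
    \<and> (\<forall>g\<in>transv_group (Omega p). B ** g ** matrix_inv B \<in> transv_group (Omega q))
    \<and> (\<forall>g\<in>transv_group (Omega q). matrix_inv B ** g ** B \<in> transv_group (Omega p))"
  using w
proof (induction rule: rauzy_walk.induct)
  case (nil p)
  then show ?case by (simp add: inv_one)
next
  case (fwd p B q eps)
  have iq: "Inv q" using R fwd by blast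
  define A where "A = B_arrow eps q"
  define Ai where "Ai = mat 1 - elem_mat (loser eps q) (winner eps q)"
  note ai = arrow_inst[OF iq, where eps=eps, folded A_def Ai_def]
  have iB: "invertible B" using fwd by blast
  note bi = invertible_inv[OF iB]
  have inv: "invertible (A ** B)" using inv_mult(1)[OF ai(3) iB] .
  have mi: "matrix_inv (A ** B) = matrix_inv B ** Ai" using inv_mult(2)[OF ai(3) iB] ai(4) by simp
  have om: "Omega (rauzy_op eps q) = (A ** B) ** Omega p ** transpose (A ** B)"
    using arrow_mat[OF iq, of eps, folded A_def] fwd.IH by (simp add: matrix_transpose_mul matrix_mul_assoc)
  have g1: "\<forall>g\<in>transv_group (Omega p). (A ** B) ** g ** matrix_inv (A ** B) \<in> transv_group (Omega (rauzy_op eps q))"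
  proof
    fix g assume "g \<in> transv_group (Omega p)"
    then have "B ** g ** matrix_inv B \<in> transv_group (Omega q)" using fwd.IH by blast
    then have "A ** (B ** g ** matrix_inv B) ** Ai \<in> transv_group (Omega (rauzy_op eps q))" using ai(5) by blast
    then show "(A ** B) ** g ** matrix_inv (A ** B) \<in> transv_group (Omega (rauzy_op eps q))"
      unfolding mi by (simp add: matrix_mul_assoc)
  qed
  have g2: "\<forall>g\<in>transv_group (Omega (rauzy_op eps q)). matrix_inv (A ** B) ** g ** (A ** B) \<in> transv_group (Omega p)"
  proof
    fix g assume "g \<in> transv_group (Omega (rauzy_op eps q))"
    then have "Ai ** g ** A \<in> transv_group (Omega q)" using ai(6) by blast
    then have "matrix_inv B ** (Ai ** g ** A) ** B \<in> transv_group (Omega p)" using fwd.IH by blast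
    then show "matrix_inv (A ** B) ** g ** (A ** B) \<in> transv_group (Omega p)"
      unfolding mi by (simp add: matrix_mul_assoc)
  qed
  show ?case using inv om g1 g2 unfolding A_def by blast
next
  case (bwd p B q r eps)
  have ir: "Inv r" using R bwd by blast
  define A where "A = B_arrow eps r"
  define Ai where "Ai = mat 1 - elem_mat (loser eps r) (winner eps r)"
  note ai = arrow_inst[OF ir, where eps=eps, folded A_def Ai_def, unfolded bwd.hyps(3)]
  have iB: "invertible B" using bwd by blast
  have iAi: "invertible Ai" using ai(1,2) unfolding invertible_def by blast
  have mAi: "matrix_inv Ai = A" by (rule inv_unique[OF ai(2) ai(1)])
  have inv: "invertible (Ai ** B)" using inv_mult(1)[OF iAi iB] .
  have mi: "matrix_inv (Ai ** B) = matrix_inv B ** A" using inv_mult(2)[OF iAi iB] mAi by simp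
  have oq: "Omega q = A ** Omega r ** transpose A"
    using arrow_mat[OF ir, of eps, folded A_def] bwd.hyps(3) by simp
  have "Omega r = Ai ** Omega q ** transpose Ai" unfolding oq using conj_back[OF ai(1,2)] by simp
  then have om: "Omega r = (Ai ** B) ** Omega p ** transpose (Ai ** B)"
    using bwd.IH by (simp add: matrix_transpose_mul matrix_mul_assoc)
  have g1: "\<forall>g\<in>transv_group (Omega p). (Ai ** B) ** g ** matrix_inv (Ai ** B) \<in> transv_group (Omega r)"
  proof
    fix g assume "g \<in> transv_group (Omega p)"
    then have "B ** g ** matrix_inv B \<in> transv_group (Omega q)" using bwd.IH by blast
    then have "Ai ** (B ** g ** matrix_inv B) ** A \<in> transv_group (Omega r)" using ai(6) by blast
    then show "(Ai ** B) ** g ** matrix_inv (Ai ** B) \<in> transv_group (Omega r)"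
      unfolding mi by (simp add: matrix_mul_assoc)
  qed
  have g2: "\<forall>g\<in>transv_group (Omega r). matrix_inv (Ai ** B) ** g ** (Ai ** B) \<in> transv_group (Omega p)"
  proof
    fix g assume "g \<in> transv_group (Omega r)"
    then have "A ** g ** Ai \<in> transv_group (Omega q)" using ai(5) by blast
    then have "matrix_inv B ** (A ** g ** Ai) ** B \<in> transv_group (Omega p)" using bwd.IH by blast
    then show "matrix_inv (Ai ** B) ** g ** (Ai ** B) \<in> transv_group (Omega p)"
      unfolding mi by (simp add: matrix_mul_assoc)
  qed
  have "matrix_inv (B_arrow eps r) = Ai" using ai(4) unfolding A_def .
  then show ?case using inv om g1 g2 by simp
qed


theorem lemma2p7:
  fixes p0 p p' :: "('a::finite) perm_pair" and B :: "int^'a^'a"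
  assumes "CARD('a) \<ge> 3"
    and "is_perm_pair p0" and "irreducible_perm p0"
    and "p \<in> rauzy_class p0" and "p' \<in> rauzy_class p0"
    and "rauzy_walk (rauzy_class p0) p B p'"
  shows "bij_betw (\<lambda>S. B ** S ** matrix_inv B) (Sp (Omega p)) (Sp (Omega p'))
       \<and> bij_betw (\<lambda>S. B ** S ** matrix_inv B)
            (transv_group (Omega p)) (transv_group (Omega p'))"
proof -
  have c2: "CARD('a) \<ge> 2" using assms(1) by simp
  have R: "\<forall>x\<in>rauzy_class p0. Inv x" using class_Inv[OF assms(2) assms(3) c2] by blast
  note wm = walk_main[OF R assms(6)]
  have iB: "invertible B" and om: "Omega p' = B ** Omega p ** transpose B" using wm by auto
  note bi = invertible_inv[OF iB]
  define Bi where "Bi = matrix_inv B"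
  have b1: "B ** Bi = mat 1" "Bi ** B = mat 1" using bi unfolding Bi_def by auto
  have om2: "Omega p = Bi ** Omega p' ** transpose Bi" unfolding om using conj_back[OF b1] by simp
  have lr: "Bi ** (B ** S ** Bi) ** B = S" for S
  proof -
    have "Bi ** (B ** S ** Bi) ** B = (Bi ** B) ** S ** (Bi ** B)" by (simp add: matrix_mul_assoc)
    then show ?thesis using b1 by simp
  qed
  have rl: "B ** (Bi ** S ** B) ** Bi = S" for S
  proof -
    have "B ** (Bi ** S ** B) ** Bi = (B ** Bi) ** S ** (B ** Bi)" by (simp add: matrix_mul_assoc)
    then show ?thesis using b1 by simp
  qed
  have "bij_betw (\<lambda>S. B ** S ** Bi) (Sp (Omega p)) (Sp (Omega p'))"
  proof (rule bij_betw_byWitness[where f'="\<lambda>S. Bi ** S ** B"])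
    show "\<forall>S\<in>Sp (Omega p). Bi ** (B ** S ** Bi) ** B = S" using lr by blast
    show "\<forall>S\<in>Sp (Omega p'). B ** (Bi ** S ** B) ** Bi = S" using rl by blast
    show "(\<lambda>S. B ** S ** Bi) ` Sp (Omega p) \<subseteq> Sp (Omega p')"
      unfolding om using Sp_conj[OF b1] by blast
    show "(\<lambda>S. Bi ** S ** B) ` Sp (Omega p') \<subseteq> Sp (Omega p)"
      using Sp_conj[OF b1(2) b1(1), of _ "Omega p'"] unfolding om2[symmetric] by blast
  qed
  moreover have "bij_betw (\<lambda>S. B ** S ** Bi) (transv_group (Omega p)) (transv_group (Omega p'))"
  proof (rule bij_betw_byWitness[where f'="\<lambda>S. Bi ** S ** B"])
    show "\<forall>S\<in>transv_group (Omega p). Bi ** (B ** S ** Bi) ** B = S" using lr by blast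
    show "\<forall>S\<in>transv_group (Omega p'). B ** (Bi ** S ** B) ** Bi = S" using rl by blast
    show "(\<lambda>S. B ** S ** Bi) ` transv_group (Omega p) \<subseteq> transv_group (Omega p')"
      using wm unfolding Bi_def by blast
    show "(\<lambda>S. Bi ** S ** B) ` transv_group (Omega p') \<subseteq> transv_group (Omega p)"
      using wm unfolding Bi_def by blast
  qed
  ultimately show ?thesis unfolding Bi_def by simp
qed


end
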